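(* Let $K$ be a field, and let $\Phi,\Psi\colon \bigoplus_{1\le b\le d\le 3}\mathbb{I}[b,d]^{m_{b,d}}\to \bigoplus_{1\le b\le d\le 3}\mathbb{I}[b,d]^{m'_{b,d}}$ be morphisms of representations of the quiver $A_3(bf)\colon 1\leftarrow 2\rightarrow 3$ such that $\Phi=R\,\Psi\,C$ for some automorphisms $C$ of the source and $R$ of the target. Then $\Phi^{1:3}_{1:3}=R^{1:3}_{1:3}\,\Psi^{1:3}_{1:3}\,C^{1:3}_{1:3}$ with $R^{1:3}_{1:3}$ and $C^{1:3}_{1:3}$ isomorphisms; in particular $\Phi^{1:3}_{1:3}$ and $\Psi^{1:3}_{1:3}$ are isomorphic as objects of the arrow category of representations. Consequently, for a morphism $\varphi\colon V\to W$ of finite-dimensional representations of $A_3(bf)$, the isomorphism class of the block $(\eta_W\varphi\eta_V^{-1})^{1:3}_{1:3}$ does not depend on the choice of isomorphisms $\eta_V,\eta_W$ of $V,W$ onto direct sums of interval representations.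
   Context: $\mathbb{I}[b,d]$ denotes the interval representation with $K$ at vertices $b,\dots,d$, $0$ elsewhere, identity maps between consecutive copies of $K$ and zero maps otherwise; $\mathbb{I}[b,d]^m$ is the direct sum of $m$ copies. For a morphism $\Phi\colon\bigoplus\mathbb{I}[b,d]^{m_{b,d}}\to\bigoplus\mathbb{I}[b,d]^{m'_{b,d}}$, its block $\Phi^{c:d}_{a:b}$ is $\pi_{c,d}\circ\Phi\circ\iota_{a,b}$ with $\iota_{a,b}$ the canonical summand inclusion into the source and $\pi_{c,d}$ the canonical summand projection of the target. The arrow category of representations has morphisms as objects; a morphism from $f\colon M\to N$ to $f'\colon M'\to N'$ is a pair $(F_M,F_N)$ of morphisms with $F_Nf=f'F_M$; two objects are isomorphic if such a pair of isomorphisms exists. *)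

theory Defs
  imports Main
begin

text \<open>Finite-dimensional representations of the quiver A3(bf): 1 <- 2 -> 3 over a field,
  in coordinates: the space at vertex i (i = 1,2,3) is K^(sp V i) for a finite index set,
  the two structure maps are matrices  al : V_2 -> V_1  and  be : V_2 -> V_3.
  Matrices are functions row => column => K, required to vanish outside their support.\<close>

record ('a, 'k) rep =
  sp :: "nat \<Rightarrow> 'a set"
  al :: "'a \<Rightarrow> 'a \<Rightarrow> 'k"
  be :: "'a \<Rightarrow> 'a \<Rightarrow> 'k"

type_synonym ('b, 'a, 'k) mor = "nat \<Rightarrow> 'b \<Rightarrow> 'a \<Rightarrow> 'k"

definition mmul :: "'b set \<Rightarrow> ('c \<Rightarrow> 'b \<Rightarrow> 'k::comm_semiring_1) \<Rightarrow> ('b \<Rightarrow> 'a \<Rightarrow> 'k) \<Rightarrow> 'c \<Rightarrow> 'a \<Rightarrow> 'k" where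
  "mmul S A B = (\<lambda>r c. \<Sum>x\<in>S. A r x * B x c)"

definition wf_rep :: "('a, 'k::comm_semiring_1) rep \<Rightarrow> bool" where
  "wf_rep V \<longleftrightarrow> (\<forall>i. finite (sp V i)) \<and> (\<forall>i. i \<notin> {1,2,3} \<longrightarrow> sp V i = {})
     \<and> (\<forall>r c. (r \<notin> sp V 1 \<or> c \<notin> sp V 2) \<longrightarrow> al V r c = 0)
     \<and> (\<forall>r c. (r \<notin> sp V 3 \<or> c \<notin> sp V 2) \<longrightarrow> be V r c = 0)"

text \<open>Morphism F : V -> W (F i is the linear map at vertex i, as a matrix W_i x V_i).\<close>
definition is_mor :: "('a, 'k::comm_semiring_1) rep \<Rightarrow> ('b, 'k) rep \<Rightarrow> ('b, 'a, 'k) mor \<Rightarrow> bool" where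
  "is_mor V W F \<longleftrightarrow>
     (\<forall>i r c. (i \<notin> {1,2,3} \<or> r \<notin> sp W i \<or> c \<notin> sp V i) \<longrightarrow> F i r c = 0)
     \<and> mmul (sp V 1) (F 1) (al V) = mmul (sp W 2) (al W) (F 2)
     \<and> mmul (sp V 3) (F 3) (be V) = mmul (sp W 2) (be W) (F 2)"

text \<open>Composition F o G, where G : U -> V and F : V -> W (V is the middle object).\<close>
definition comp :: "('b, 'k::comm_semiring_1) rep \<Rightarrow> ('c, 'b, 'k) mor \<Rightarrow> ('b, 'a, 'k) mor \<Rightarrow> ('c, 'a, 'k) mor" where
  "comp V F G = (\<lambda>i. mmul (sp V i) (F i) (G i))"

definition idm :: "('a, 'k::comm_semiring_1) rep \<Rightarrow> ('a, 'a, 'k) mor" where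
  "idm V = (\<lambda>i r c. if r \<in> sp V i \<and> r = c then 1 else 0)"

definition inv_pair :: "('a, 'k::comm_semiring_1) rep \<Rightarrow> ('b, 'k) rep \<Rightarrow> ('b, 'a, 'k) mor \<Rightarrow> ('a, 'b, 'k) mor \<Rightarrow> bool" where
  "inv_pair V W F G \<longleftrightarrow> is_mor V W F \<and> is_mor W V G \<and> comp W G F = idm V \<and> comp V F G = idm W"

definition is_iso :: "('a, 'k::comm_semiring_1) rep \<Rightarrow> ('b, 'k) rep \<Rightarrow> ('b, 'a, 'k) mor \<Rightarrow> bool" where
  "is_iso V W F \<longleftrightarrow> (\<exists>G. inv_pair V W F G)"

text \<open>Direct sum  \<Oplus>_{1\<le>b\<le>d\<le>3} I[b,d]^{m b d}; basis vectors are triples (b,d,j), j < m b d,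
  and (b,d,j) lives at vertex i iff b \<le> i \<le> d.\<close>
type_synonym idx = "nat \<times> nat \<times> nat"

definition dsp :: "(nat \<Rightarrow> nat \<Rightarrow> nat) \<Rightarrow> nat \<Rightarrow> idx set" where
  "dsp m i = (if i \<in> {1,2,3} then {(b,d,j). 1 \<le> b \<and> b \<le> i \<and> i \<le> d \<and> d \<le> 3 \<and> j < m b d} else {})"

definition DS :: "(nat \<Rightarrow> nat \<Rightarrow> nat) \<Rightarrow> (idx, 'k::comm_semiring_1) rep" where
  "DS m = \<lparr> sp = dsp m,
            al = (\<lambda>r c. if r \<in> dsp m 1 \<and> c \<in> dsp m 2 \<and> r = c then 1 else 0),
            be = (\<lambda>r c. if r \<in> dsp m 3 \<and> c \<in> dsp m 2 \<and> r = c then 1 else 0) \<rparr>"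

text \<open>I[a,b]^k as the direct sum with only the summand (a,b) present.\<close>
definition Iint :: "nat \<Rightarrow> nat \<Rightarrow> nat \<Rightarrow> (idx, 'k::comm_semiring_1) rep" where
  "Iint k a b = DS (\<lambda>x y. if x = a \<and> y = b then k else 0)"

definition incl :: "(nat \<Rightarrow> nat \<Rightarrow> nat) \<Rightarrow> nat \<Rightarrow> nat \<Rightarrow> (idx, idx, 'k::comm_semiring_1) mor" where
  "incl m a b = (\<lambda>i r c. if c \<in> dsp (\<lambda>x y. if x = a \<and> y = b then m a b else 0) i \<and> r = c then 1 else 0)"

definition proj :: "(nat \<Rightarrow> nat \<Rightarrow> nat) \<Rightarrow> nat \<Rightarrow> nat \<Rightarrow> (idx, idx, 'k::comm_semiring_1) mor" where
  "proj m c d = (\<lambda>i r x. if r \<in> dsp (\<lambda>x y. if x = c \<and> y = d then m c d else 0) i \<and> r = x then 1 else 0)"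

text \<open>block  \<Phi>^{c:d}_{a:b} = \<pi>_{c,d} o \<Phi> o \<iota>_{a,b}  for  \<Phi> : DS m -> DS m'\<close>
definition blk :: "(nat \<Rightarrow> nat \<Rightarrow> nat) \<Rightarrow> (nat \<Rightarrow> nat \<Rightarrow> nat) \<Rightarrow> nat \<Rightarrow> nat \<Rightarrow> nat \<Rightarrow> nat
                    \<Rightarrow> (idx, idx, 'k::comm_semiring_1) mor \<Rightarrow> (idx, idx, 'k) mor" where
  "blk m m' a b c d \<Phi> = comp (DS m') (proj m' c d) (comp (DS m) \<Phi> (incl m a b))"

definition arrow_iso :: "('a, 'k::comm_semiring_1) rep \<Rightarrow> ('b, 'k) rep \<Rightarrow> ('b, 'a, 'k) mor
                         \<Rightarrow> ('c, 'k) rep \<Rightarrow> ('d, 'k) rep \<Rightarrow> ('d, 'c, 'k) mor \<Rightarrow> bool" where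
  "arrow_iso M N f M' N' f' \<longleftrightarrow> is_mor M N f \<and> is_mor M' N' f' \<and>
     (\<exists>FM FN. is_iso M M' FM \<and> is_iso N N' FN \<and> comp N FN f = comp M' f' FM)"

end

theory Submission
  imports Defs
begin


lemma mem_dsp[simp]: "(b,d,j) \<in> dsp m i \<longleftrightarrow> i \<in> {1,2,3} \<and> 1 \<le> b \<and> b \<le> i \<and> i \<le> d \<and> d \<le> 3 \<and> j < m b d"
  by (auto simp: dsp_def)

lemma finite_dsp[simp]: "finite (dsp m i)"
proof -
  have "dsp m i \<subseteq> (SIGMA b:{..3}. SIGMA d:{..3}. {..<m b d})"
    by (auto simp: dsp_def)
  moreover have "finite (SIGMA b:{..3::nat}. SIGMA d:{..3::nat}. {..<m b d})" by auto
  ultimately show ?thesis by (rule finite_subset)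
qed

lemma sp_DS[simp]: "sp (DS m) = dsp m" by (simp add: DS_def)
lemma al_DS[simp]: "al (DS m) = (\<lambda>r c. if r \<in> dsp m 1 \<and> c \<in> dsp m 2 \<and> r = c then 1 else 0)" by (simp add: DS_def)
lemma be_DS[simp]: "be (DS m) = (\<lambda>r c. if r \<in> dsp m 3 \<and> c \<in> dsp m 2 \<and> r = c then 1 else 0)" by (simp add: DS_def)

lemma sum_delta_r: "finite S \<Longrightarrow> (\<Sum>x\<in>S. f x * (if x \<in> S \<and> P \<and> x = c then 1 else 0)) = (if c \<in> S \<and> P then (f c::'k::comm_semiring_1) else 0)"
proof -
  assume "finite S"
  have "(\<Sum>x\<in>S. f x * (if x \<in> S \<and> P \<and> x = c then 1 else 0)) = (\<Sum>x\<in>S. if x = c then (if P then f c else 0) else 0)"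
    by (rule sum.cong) auto
  also have "\<dots> = (if c \<in> S \<and> P then f c else 0)" using \<open>finite S\<close> by (simp add: sum.delta')
  finally show ?thesis .
qed

lemma sum_delta_l: "finite S \<Longrightarrow> (\<Sum>x\<in>S. (if r \<in> T \<and> x \<in> S \<and> r = x then 1 else 0) * f x) = (if r \<in> T \<and> r \<in> S then (f r::'k::comm_semiring_1) else 0)"
proof -
  assume "finite S"
  have "(\<Sum>x\<in>S. (if r \<in> T \<and> x \<in> S \<and> r = x then 1 else 0) * f x) = (\<Sum>x\<in>S. if r = x then (if r \<in> T then f r else 0) else 0)"
    by (rule sum.cong) auto
  also have "\<dots> = (if r \<in> T \<and> r \<in> S then f r else 0)" using \<open>finite S\<close> by (simp add: sum.delta)
  finally show ?thesis .
qed

lemma is_mor_DS_iff: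
  "is_mor (DS m) (DS m') (F::(idx,idx,'k::comm_semiring_1) mor) \<longleftrightarrow>
    (\<forall>i r c. (i \<notin> {1,2,3} \<or> r \<notin> dsp m' i \<or> c \<notin> dsp m i) \<longrightarrow> F i r c = 0)
    \<and> (\<forall>r c. (if c \<in> dsp m 1 \<and> c \<in> dsp m 2 then F 1 r c else 0) = (if r \<in> dsp m' 1 \<and> r \<in> dsp m' 2 then F 2 r c else 0))
    \<and> (\<forall>r c. (if c \<in> dsp m 3 \<and> c \<in> dsp m 2 then F 3 r c else 0) = (if r \<in> dsp m' 3 \<and> r \<in> dsp m' 2 then F 2 r c else 0))"
proof -
  have e1: "mmul (dsp m 1) (F 1) (al (DS m)) = (\<lambda>r c. if c \<in> dsp m 1 \<and> c \<in> dsp m 2 then F 1 r c else 0)"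
    by (rule ext)+ (simp only: mmul_def al_DS be_DS sum_delta_r finite_dsp)
  have e2: "mmul (dsp m' 2) (al (DS m')) (F 2) = (\<lambda>r c. if r \<in> dsp m' 1 \<and> r \<in> dsp m' 2 then F 2 r c else 0)"
    by (rule ext)+ (simp only: mmul_def al_DS be_DS sum_delta_l finite_dsp)
  have e3: "mmul (dsp m 3) (F 3) (be (DS m)) = (\<lambda>r c. if c \<in> dsp m 3 \<and> c \<in> dsp m 2 then F 3 r c else 0)"
    by (rule ext)+ (simp only: mmul_def al_DS be_DS sum_delta_r finite_dsp)
  have e4: "mmul (dsp m' 2) (be (DS m')) (F 2) = (\<lambda>r c. if r \<in> dsp m' 3 \<and> r \<in> dsp m' 2 then F 2 r c else 0)"
    by (rule ext)+ (simp only: mmul_def al_DS be_DS sum_delta_l finite_dsp)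
  show ?thesis unfolding is_mor_def sp_DS e1 e2 e3 e4 by (auto simp: fun_eq_iff)
qed

lemma mor_sup: "is_mor (DS m) (DS m') F \<Longrightarrow> (i \<notin> {1,2,3} \<or> r \<notin> dsp m' i \<or> c \<notin> dsp m i) \<Longrightarrow> F i r c = 0"
  unfolding is_mor_DS_iff by blast
lemma mor_al: "is_mor (DS m) (DS m') F \<Longrightarrow> (if c \<in> dsp m 1 \<and> c \<in> dsp m 2 then F 1 r c else 0) = (if r \<in> dsp m' 1 \<and> r \<in> dsp m' 2 then F 2 r c else 0)"
  unfolding is_mor_DS_iff by blast
lemma mor_be: "is_mor (DS m) (DS m') F \<Longrightarrow> (if c \<in> dsp m 3 \<and> c \<in> dsp m 2 then F 3 r c else 0) = (if r \<in> dsp m' 3 \<and> r \<in> dsp m' 2 then F 2 r c else 0)"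
  unfolding is_mor_DS_iff by blast

lemma zeroF:
  assumes F: "is_mor (DS m) (DS m') F" and j: "j < m 1 3" and bd: "(b = 1 \<and> d = 1) \<or> (b = 3 \<and> d = (3::nat))"
  shows "F i (b,d,k) (1,3,j) = 0"
proof (cases "(b,d,k) \<in> dsp m' i")
  case False then show ?thesis using mor_sup[OF F] by blast
next
  case True
  from bd show ?thesis
  proof
    assume h: "b = 1 \<and> d = 1"
    with True have "i = 1" by auto
    with mor_al[OF F, of "(1,3,j)" "(b,d,k)"] h j show ?thesis by simp
  next
    assume h: "b = 3 \<and> d = 3"
    with True have "i = 3" by auto
    with mor_be[OF F, of "(1,3,j)" "(b,d,k)"] h j show ?thesis by simp
  qed
qed

lemma zeroG:
  assumes F: "is_mor (DS m) (DS m') F" and j: "j < m' 1 3"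
    and bd: "(b = 1 \<and> d = 2) \<or> (b = 2 \<and> d = 2) \<or> (b = 2 \<and> d = (3::nat))"
  shows "F i (1,3,j) (b,d,k) = 0"
proof (cases "(b,d,k) \<in> dsp m i")
  case False then show ?thesis using mor_sup[OF F] by blast
next
  case True
  have km: "k < m b d" using True by simp
  have f2: "F 2 (1,3,j) (b,d,k) = 0"
    using bd km mor_al[OF F, of "(b,d,k)" "(1,3,j)"] mor_be[OF F, of "(b,d,k)" "(1,3,j)"] j
    by (auto split: if_splits)
  then show ?thesis
    using bd True mor_al[OF F, of "(b,d,k)" "(1,3,j)"] mor_be[OF F, of "(b,d,k)" "(1,3,j)"] j
    by (auto split: if_splits)
qed

lemma diagC:
  assumes F: "is_mor (DS m) (DS m') F" and j: "j < m 1 3" and j': "j' < m' 1 3"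
  shows "F 1 (1,3,j') (1,3,j) = F 2 (1,3,j') (1,3,j)" "F 3 (1,3,j') (1,3,j) = F 2 (1,3,j') (1,3,j)"
  using mor_al[OF F, of "(1,3,j)" "(1,3,j')"] mor_be[OF F, of "(1,3,j)" "(1,3,j')"] j j' by auto

lemma mmul_assoc: "finite S \<Longrightarrow> finite T \<Longrightarrow> mmul S A (mmul T B C) = mmul T (mmul S A B) (C::_\<Rightarrow>_\<Rightarrow>'k::comm_semiring_1)"
  unfolding mmul_def
  by (rule ext)+ (simp add: sum_distrib_left sum_distrib_right mult.assoc sum.swap[of _ S])

lemma comp_assoc: "(\<And>i. finite (sp B i)) \<Longrightarrow> (\<And>i. finite (sp C i)) \<Longrightarrow>
   comp B F (comp C G H) = comp C (comp B F G) (H::(_,_,'k::comm_semiring_1) mor)"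
  unfolding comp_def by (rule ext) (simp add: mmul_assoc)

lemma is_mor_comp:
  assumes G: "is_mor U V G" and F: "is_mor V W (F::(_,_,'k::comm_semiring_1) mor)"
    and fU: "\<And>i. finite (sp U i)" and fV: "\<And>i. finite (sp V i)" and fW: "\<And>i. finite (sp W i)"
  shows "is_mor U W (comp V F G)"
proof -
  have s: "comp V F G i r c = 0" if "i \<notin> {1,2,3} \<or> r \<notin> sp W i \<or> c \<notin> sp U i" for i r c
  proof -
    have "\<forall>x. F i r x * G i x c = 0" using that F G unfolding is_mor_def by auto
    then show ?thesis by (simp add: comp_def mmul_def)
  qed
  have a1: "mmul (sp V 1) (F 1) (al V) = mmul (sp W 2) (al W) (F 2)"
   and a2: "mmul (sp V 3) (F 3) (be V) = mmul (sp W 2) (be W) (F 2)" using F by (auto simp: is_mor_def)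
  have b1: "mmul (sp U 1) (G 1) (al U) = mmul (sp V 2) (al V) (G 2)"
   and b2: "mmul (sp U 3) (G 3) (be U) = mmul (sp V 2) (be V) (G 2)" using G by (auto simp: is_mor_def)
  have "mmul (sp U 1) (comp V F G 1) (al U) = mmul (sp V 1) (F 1) (mmul (sp U 1) (G 1) (al U))"
    by (simp add: comp_def mmul_assoc fU fV)
  also have "\<dots> = mmul (sp V 2) (mmul (sp V 1) (F 1) (al V)) (G 2)" unfolding b1 by (rule mmul_assoc[OF fV fV])
  also have "\<dots> = mmul (sp W 2) (al W) (comp V F G 2)" unfolding a1 comp_def by (rule mmul_assoc[OF fW fV, symmetric])
  finally have c1: "mmul (sp U 1) (comp V F G 1) (al U) = mmul (sp W 2) (al W) (comp V F G 2)" .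
  have "mmul (sp U 3) (comp V F G 3) (be U) = mmul (sp V 3) (F 3) (mmul (sp U 3) (G 3) (be U))"
    by (simp add: comp_def mmul_assoc fU fV)
  also have "\<dots> = mmul (sp V 2) (mmul (sp V 3) (F 3) (be V)) (G 2)" unfolding b2 by (rule mmul_assoc[OF fV fV])
  also have "\<dots> = mmul (sp W 2) (be W) (comp V F G 2)" unfolding a2 comp_def by (rule mmul_assoc[OF fW fV, symmetric])
  finally have c2: "mmul (sp U 3) (comp V F G 3) (be U) = mmul (sp W 2) (be W) (comp V F G 2)" .
  show ?thesis unfolding is_mor_def using s c1 c2 by blast
qed

lemma comp_idm_left: "is_mor V W F \<Longrightarrow> (\<And>i. finite (sp W i)) \<Longrightarrow> comp W (idm W) F = (F::(_,_,'k::comm_semiring_1) mor)"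
proof (rule ext)+
  fix i r c assume F: "is_mor V W F" and f: "\<And>i. finite (sp W i)"
  have "comp W (idm W) F i r c = (\<Sum>x\<in>sp W i. (if r \<in> sp W i \<and> x \<in> sp W i \<and> r = x then 1 else 0) * F i x c)"
    unfolding comp_def mmul_def idm_def by (rule sum.cong) auto
  also have "\<dots> = (if r \<in> sp W i \<and> r \<in> sp W i then F i r c else 0)" by (rule sum_delta_l[OF f])
  also have "\<dots> = F i r c" using F unfolding is_mor_def by auto
  finally show "comp W (idm W) F i r c = F i r c" .
qed

lemma comp_idm_right: "is_mor V W F \<Longrightarrow> (\<And>i. finite (sp V i)) \<Longrightarrow> comp V F (idm V) = (F::(_,_,'k::comm_semiring_1) mor)"
proof (rule ext)+
  fix i r c assume F: "is_mor V W F" and f: "\<And>i. finite (sp V i)"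
  have "comp V F (idm V) i r c = (\<Sum>x\<in>sp V i. F i r x * (if x \<in> sp V i \<and> True \<and> x = c then 1 else 0))"
    unfolding comp_def mmul_def idm_def by (rule sum.cong) auto
  also have "\<dots> = (if c \<in> sp V i \<and> True then F i r c else 0)" by (rule sum_delta_r[OF f])
  also have "\<dots> = F i r c" using F unfolding is_mor_def by auto
  finally show "comp V F (idm V) i r c = F i r c" .
qed

abbreviation T13 :: "nat \<Rightarrow> nat \<Rightarrow> idx set" where
  "T13 k i \<equiv> dsp (\<lambda>x y. if x = 1 \<and> y = 3 then k else 0) i"

lemma memT: "x \<in> T13 k i \<longleftrightarrow> i \<in> {1,2,3} \<and> (\<exists>j<k. x = (1,3,j))"
  by (cases x) (auto split: if_splits)

lemma subT: "x \<in> T13 (m 1 3) i \<Longrightarrow> x \<in> dsp m i"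
  by (cases x) (auto split: if_splits)

lemma sp_Iint[simp]: "sp (Iint k 1 3) = T13 k" by (simp add: Iint_def)

lemma blk_eq: "blk m m' 1 3 1 3 (F::(idx,idx,'k::comm_semiring_1) mor) =
   (\<lambda>i r c. if r \<in> T13 (m' 1 3) i \<and> c \<in> T13 (m 1 3) i then F i r c else 0)"
proof -
  have inner: "comp (DS m) F (incl m 1 3) = (\<lambda>i r c. if c \<in> T13 (m 1 3) i then F i r c else 0)"
  proof (rule ext)+
    fix i r c
    have "comp (DS m) F (incl m 1 3) i r c = (\<Sum>x\<in>dsp m i. if x = c then (if c \<in> T13 (m 1 3) i then F i r c else 0) else 0)"
      unfolding comp_def mmul_def incl_def sp_DS by (rule sum.cong) auto
    also have "\<dots> = (if c \<in> T13 (m 1 3) i then F i r c else 0)"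
      using subT[of c m i] by (simp add: sum.delta')
    finally show "comp (DS m) F (incl m 1 3) i r c = (if c \<in> T13 (m 1 3) i then F i r c else 0)" .
  qed
  show ?thesis
  proof (rule ext)+
    fix i r c
    have "blk m m' 1 3 1 3 F i r c = (\<Sum>x\<in>dsp m' i. if x = r then (if r \<in> T13 (m' 1 3) i \<and> c \<in> T13 (m 1 3) i then F i r c else 0) else 0)"
      unfolding blk_def inner unfolding comp_def mmul_def proj_def sp_DS by (rule sum.cong) auto
    also have "\<dots> = (if r \<in> T13 (m' 1 3) i \<and> c \<in> T13 (m 1 3) i then F i r c else 0)"
      using subT[of r m' i] by (simp add: sum.delta)
    finally show "blk m m' 1 3 1 3 F i r c = (if r \<in> T13 (m' 1 3) i \<and> c \<in> T13 (m 1 3) i then F i r c else 0)" .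
  qed
qed

lemma blk_comp:
  assumes F: "is_mor (DS m1) (DS m2) F" and G: "is_mor (DS m2) (DS m3) (G::(idx,idx,'k::comm_semiring_1) mor)"
  shows "blk m1 m3 1 3 1 3 (comp (DS m2) G F) = comp (Iint (m2 1 3) 1 3) (blk m2 m3 1 3 1 3 G) (blk m1 m2 1 3 1 3 F)"
proof (rule ext)+
  fix i r c
  show "blk m1 m3 1 3 1 3 (comp (DS m2) G F) i r c = comp (Iint (m2 1 3) 1 3) (blk m2 m3 1 3 1 3 G) (blk m1 m2 1 3 1 3 F) i r c"
  proof (cases "r \<in> T13 (m3 1 3) i \<and> c \<in> T13 (m1 1 3) i")
    case False
    then show ?thesis unfolding blk_eq comp_def mmul_def sp_Iint by auto
  next
    case True
    then obtain j j' where r: "r = (1,3,j')" and c: "c = (1,3,j)" and j: "j < m1 1 3" and j': "j' < m3 1 3"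
      and i: "i \<in> {1,2,3}" unfolding memT by blast
    have "comp (Iint (m2 1 3) 1 3) (blk m2 m3 1 3 1 3 G) (blk m1 m2 1 3 1 3 F) i r c
        = (\<Sum>x\<in>T13 (m2 1 3) i. G i r x * F i x c)"
      unfolding blk_eq comp_def mmul_def sp_Iint using True by (intro sum.cong) auto
    also have "\<dots> = (\<Sum>x\<in>dsp m2 i. G i r x * F i x c)"
    proof (rule sum.mono_neutral_left)
      show "finite (dsp m2 i)" by simp
      show "T13 (m2 1 3) i \<subseteq> dsp m2 i" using subT by blast
      show "\<forall>x\<in>dsp m2 i - T13 (m2 1 3) i. G i r x * F i x c = 0"
      proof
        fix x assume x: "x \<in> dsp m2 i - T13 (m2 1 3) i"
        obtain b d k where xe: "x = (b,d,k)" by (cases x)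
        have bd: "1 \<le> b" "b \<le> d" "d \<le> 3" "\<not> (b = 1 \<and> d = 3)" using x xe i by auto
        then have "(b = 1 \<and> d = 1) \<or> (b = 3 \<and> d = 3) \<or> (b = 1 \<and> d = 2) \<or> (b = 2 \<and> d = 2) \<or> (b = 2 \<and> d = 3)"
          by auto
        then show "G i r x * F i x c = 0"
          using zeroF[OF F j, of 1 1 i k] zeroF[OF F j, of 3 3 i k] zeroG[OF G j', of 1 2 i k]
            zeroG[OF G j', of 2 2 i k] zeroG[OF G j', of 2 3 i k]
          by (elim disjE) (simp_all add: xe r c)
      qed
    qed
    also have "\<dots> = blk m1 m3 1 3 1 3 (comp (DS m2) G F) i r c"
      unfolding blk_eq comp_def mmul_def sp_DS using True by simp
    finally show ?thesis by simp
  qed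
qed

lemma Iint13: "Iint k 1 3 = DS (\<lambda>x y. if x = 1 \<and> y = 3 then k else 0)" by (simp add: Iint_def)

lemma blk_mor:
  assumes F: "is_mor (DS m) (DS m') (F::(idx,idx,'k::comm_semiring_1) mor)"
  shows "is_mor (Iint (m 1 3) 1 3) (Iint (m' 1 3) 1 3) (blk m m' 1 3 1 3 F)"
  unfolding Iint13 is_mor_DS_iff
proof (intro conjI allI impI)
  fix i r c assume "i \<notin> {1, 2, 3} \<or> r \<notin> T13 (m' 1 3) i \<or> c \<notin> T13 (m 1 3) i"
  then show "blk m m' 1 3 1 3 F i r c = 0" unfolding blk_eq memT by auto
next
  fix r c
  show "(if c \<in> T13 (m 1 3) 1 \<and> c \<in> T13 (m 1 3) 2 then blk m m' 1 3 1 3 F 1 r c else 0) =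
        (if r \<in> T13 (m' 1 3) 1 \<and> r \<in> T13 (m' 1 3) 2 then blk m m' 1 3 1 3 F 2 r c else 0)"
    unfolding blk_eq memT using diagC[OF F] by auto
next
  fix r c
  show "(if c \<in> T13 (m 1 3) 3 \<and> c \<in> T13 (m 1 3) 2 then blk m m' 1 3 1 3 F 3 r c else 0) =
        (if r \<in> T13 (m' 1 3) 3 \<and> r \<in> T13 (m' 1 3) 2 then blk m m' 1 3 1 3 F 2 r c else 0)"
    unfolding blk_eq memT using diagC[OF F] by auto
qed

lemma blk_idm: "blk m m 1 3 1 3 (idm (DS m) :: (idx,idx,'k::comm_semiring_1) mor) = idm (Iint (m 1 3) 1 3)"
  unfolding blk_eq idm_def sp_Iint sp_DS memT by (rule ext)+ auto

lemma blk_inv_pair: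
  assumes "inv_pair (DS m) (DS m') R (R'::(idx,idx,'k::comm_semiring_1) mor)"
  shows "inv_pair (Iint (m 1 3) 1 3) (Iint (m' 1 3) 1 3) (blk m m' 1 3 1 3 R) (blk m' m 1 3 1 3 R')"
proof -
  have R: "is_mor (DS m) (DS m') R" and R': "is_mor (DS m') (DS m) R'"
    and e1: "comp (DS m') R' R = idm (DS m)" and e2: "comp (DS m) R R' = idm (DS m')"
    using assms by (auto simp: inv_pair_def)
  show ?thesis unfolding inv_pair_def
    using blk_mor[OF R] blk_mor[OF R'] blk_comp[OF R R'] blk_comp[OF R' R] e1 e2 blk_idm
    by metis
qed

lemma blk_iso: "is_iso (DS m) (DS m') (R::(idx,idx,'k::comm_semiring_1) mor) \<Longrightarrow>
   is_iso (Iint (m 1 3) 1 3) (Iint (m' 1 3) 1 3) (blk m m' 1 3 1 3 R)"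
  unfolding is_iso_def using blk_inv_pair by blast

lemma fin_DS: "finite (sp (DS m) i)" by simp
lemma fin_wf: "wf_rep V \<Longrightarrow> finite (sp V i)" by (simp add: wf_rep_def)

lemma inv_trans:
  assumes p1: "inv_pair V X1 e1 e1i" and p2: "inv_pair V X2 e2 (e2i::(_,_,'k::comm_semiring_1) mor)"
    and fV: "\<And>i. finite (sp V i)" and f1: "\<And>i. finite (sp X1 i)" and f2: "\<And>i. finite (sp X2 i)"
  shows "comp X2 (comp V e1 e2i) (comp V e2 e1i) = idm X1"
proof -
  have m1: "is_mor V X1 e1" "is_mor X1 V e1i" and i1: "comp V e1 e1i = idm X1" using p1 by (auto simp: inv_pair_def)
  have i2: "comp X2 e2i e2 = idm V" using p2 by (auto simp: inv_pair_def)
  have "comp X2 (comp V e1 e2i) (comp V e2 e1i) = comp V e1 (comp X2 e2i (comp V e2 e1i))"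
    by (rule comp_assoc[OF fV f2, symmetric])
  also have "comp X2 e2i (comp V e2 e1i) = comp V (comp X2 e2i e2) e1i" by (rule comp_assoc[OF f2 fV])
  also have "\<dots> = e1i" unfolding i2 by (rule comp_idm_left[OF m1(2) fV])
  finally show ?thesis using i1 by simp
qed

lemma inv_pair_trans:
  assumes p1: "inv_pair V X1 e1 e1i" and p2: "inv_pair V X2 e2 (e2i::(_,_,'k::comm_semiring_1) mor)"
    and fV: "\<And>i. finite (sp V i)" and f1: "\<And>i. finite (sp X1 i)" and f2: "\<And>i. finite (sp X2 i)"
  shows "inv_pair X1 X2 (comp V e2 e1i) (comp V e1 e2i)"
proof -
  have "is_mor V X1 e1" "is_mor X1 V e1i" "is_mor V X2 e2" "is_mor X2 V e2i" using p1 p2 by (auto simp: inv_pair_def)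
  then show ?thesis unfolding inv_pair_def
    using inv_trans[OF p1 p2 fV f1 f2] inv_trans[OF p2 p1 fV f2 f1] is_mor_comp fV f1 f2 by metis
qed


theorem mainTheorem4:
  fixes m m' :: "nat \<Rightarrow> nat \<Rightarrow> nat"
    and \<Phi> \<Psi> C R :: "(idx, idx, 'k::field) mor"
  assumes "is_mor (DS m) (DS m') \<Phi>" and "is_mor (DS m) (DS m') \<Psi>"
    and "is_iso (DS m) (DS m) C" and "is_iso (DS m') (DS m') R"
    and "\<Phi> = comp (DS m') R (comp (DS m) \<Psi> C)"
  shows "blk m m' 1 3 1 3 \<Phi> =
           comp (Iint (m' 1 3) 1 3) (blk m' m' 1 3 1 3 R)
             (comp (Iint (m 1 3) 1 3) (blk m m' 1 3 1 3 \<Psi>) (blk m m 1 3 1 3 C))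
       \<and> is_iso (Iint (m' 1 3) 1 3) (Iint (m' 1 3) 1 3) (blk m' m' 1 3 1 3 R)
       \<and> is_iso (Iint (m 1 3) 1 3) (Iint (m 1 3) 1 3) (blk m m 1 3 1 3 C)
       \<and> arrow_iso (Iint (m 1 3) 1 3) (Iint (m' 1 3) 1 3) (blk m m' 1 3 1 3 \<Phi>)
                   (Iint (m 1 3) 1 3) (Iint (m' 1 3) 1 3) (blk m m' 1 3 1 3 \<Psi>)
       \<and> (\<forall>(V :: ('a, 'k) rep) (W :: ('b, 'k) rep) \<phi>
            mV \<eta>V \<eta>Vi mV2 \<eta>V2 \<eta>V2i mW \<eta>W \<eta>Wi mW2 \<eta>W2 \<eta>W2i.
            wf_rep V \<and> wf_rep W \<and> is_mor V W \<phi>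
            \<and> inv_pair V (DS mV) \<eta>V \<eta>Vi \<and> inv_pair V (DS mV2) \<eta>V2 \<eta>V2i
            \<and> inv_pair W (DS mW) \<eta>W \<eta>Wi \<and> inv_pair W (DS mW2) \<eta>W2 \<eta>W2i
            \<longrightarrow> arrow_iso (Iint (mV 1 3) 1 3) (Iint (mW 1 3) 1 3)
                   (blk mV mW 1 3 1 3 (comp W \<eta>W (comp V \<phi> \<eta>Vi)))
                 (Iint (mV2 1 3) 1 3) (Iint (mW2 1 3) 1 3)
                   (blk mV2 mW2 1 3 1 3 (comp W \<eta>W2 (comp V \<phi> \<eta>V2i))))"
proof -
  note fD = fin_DS
  obtain C' where pC: "inv_pair (DS m) (DS m) C C'" using assms(3) by (auto simp: is_iso_def)
  obtain R' where pR: "inv_pair (DS m') (DS m') R R'" using assms(4) by (auto simp: is_iso_def)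
  have Cm: "is_mor (DS m) (DS m) C" and Rm: "is_mor (DS m') (DS m') R"
    and R'm: "is_mor (DS m') (DS m') R'" and RR: "comp (DS m') R' R = idm (DS m')"
    using pC pR by (auto simp: inv_pair_def)
  have Rinv: "inv_pair (DS m') (DS m') R' R" using pR by (auto simp: inv_pair_def)
  define X where "X = comp (DS m) \<Psi> C"
  have Xm: "is_mor (DS m) (DS m') X" unfolding X_def by (rule is_mor_comp[OF Cm assms(2) fD fD fD])
  have P1: "blk m m' 1 3 1 3 \<Phi> =
           comp (Iint (m' 1 3) 1 3) (blk m' m' 1 3 1 3 R)
             (comp (Iint (m 1 3) 1 3) (blk m m' 1 3 1 3 \<Psi>) (blk m m 1 3 1 3 C))"
    unfolding assms(5) blk_comp[OF Xm[unfolded X_def] Rm] blk_comp[OF Cm assms(2)] ..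
  have P2: "is_iso (Iint (m' 1 3) 1 3) (Iint (m' 1 3) 1 3) (blk m' m' 1 3 1 3 R)"
    by (rule blk_iso[OF assms(4)])
  have P3: "is_iso (Iint (m 1 3) 1 3) (Iint (m 1 3) 1 3) (blk m m 1 3 1 3 C)"
    by (rule blk_iso[OF assms(3)])
  have eqX: "comp (DS m') R' \<Phi> = X"
  proof -
    have "comp (DS m') R' \<Phi> = comp (DS m') R' (comp (DS m') R X)" unfolding assms(5) X_def ..
    also have "\<dots> = comp (DS m') (comp (DS m') R' R) X" by (rule comp_assoc[OF fD fD])
    also have "\<dots> = X" unfolding RR by (rule comp_idm_left[OF Xm fD])
    finally show ?thesis .
  qed
  have P4: "arrow_iso (Iint (m 1 3) 1 3) (Iint (m' 1 3) 1 3) (blk m m' 1 3 1 3 \<Phi>)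
                   (Iint (m 1 3) 1 3) (Iint (m' 1 3) 1 3) (blk m m' 1 3 1 3 \<Psi>)"
    unfolding arrow_iso_def
  proof (intro conjI exI)
    show "is_mor (Iint (m 1 3) 1 3) (Iint (m' 1 3) 1 3) (blk m m' 1 3 1 3 \<Phi>)" by (rule blk_mor[OF assms(1)])
    show "is_mor (Iint (m 1 3) 1 3) (Iint (m' 1 3) 1 3) (blk m m' 1 3 1 3 \<Psi>)" by (rule blk_mor[OF assms(2)])
    show "is_iso (Iint (m 1 3) 1 3) (Iint (m 1 3) 1 3) (blk m m 1 3 1 3 C)" by (rule P3)
    show "is_iso (Iint (m' 1 3) 1 3) (Iint (m' 1 3) 1 3) (blk m' m' 1 3 1 3 R')"
      using blk_inv_pair[OF Rinv] by (auto simp: is_iso_def)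
    show "comp (Iint (m' 1 3) 1 3) (blk m' m' 1 3 1 3 R') (blk m m' 1 3 1 3 \<Phi>) =
          comp (Iint (m 1 3) 1 3) (blk m m' 1 3 1 3 \<Psi>) (blk m m 1 3 1 3 C)"
      using blk_comp[OF assms(1) R'm] blk_comp[OF Cm assms(2)] eqX X_def by simp
  qed
  have P5: "\<forall>(V :: ('a, 'k) rep) (W :: ('b, 'k) rep) \<phi>
            mV \<eta>V \<eta>Vi mV2 \<eta>V2 \<eta>V2i mW \<eta>W \<eta>Wi mW2 \<eta>W2 \<eta>W2i.
            wf_rep V \<and> wf_rep W \<and> is_mor V W \<phi>
            \<and> inv_pair V (DS mV) \<eta>V \<eta>Vi \<and> inv_pair V (DS mV2) \<eta>V2 \<eta>V2i
            \<and> inv_pair W (DS mW) \<eta>W \<eta>Wi \<and> inv_pair W (DS mW2) \<eta>W2 \<eta>W2i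
            \<longrightarrow> arrow_iso (Iint (mV 1 3) 1 3) (Iint (mW 1 3) 1 3)
                   (blk mV mW 1 3 1 3 (comp W \<eta>W (comp V \<phi> \<eta>Vi)))
                 (Iint (mV2 1 3) 1 3) (Iint (mW2 1 3) 1 3)
                   (blk mV2 mW2 1 3 1 3 (comp W \<eta>W2 (comp V \<phi> \<eta>V2i)))"
  proof (intro allI impI)
    fix V :: "('a, 'k) rep" and W :: "('b, 'k) rep" and \<phi>
      mV \<eta>V \<eta>Vi mV2 \<eta>V2 \<eta>V2i mW \<eta>W \<eta>Wi mW2 \<eta>W2 \<eta>W2i
    assume H: "wf_rep V \<and> wf_rep W \<and> is_mor V W \<phi>
            \<and> inv_pair V (DS mV) \<eta>V \<eta>Vi \<and> inv_pair V (DS mV2) \<eta>V2 \<eta>V2i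
            \<and> inv_pair W (DS mW) \<eta>W \<eta>Wi \<and> inv_pair W (DS mW2) \<eta>W2 \<eta>W2i"
    have fV: "\<And>i. finite (sp V i)" and fW: "\<And>i. finite (sp W i)" using H fin_wf by blast+
    have phi: "is_mor V W \<phi>" using H by blast
    have pV: "inv_pair V (DS mV) \<eta>V \<eta>Vi" and pV2: "inv_pair V (DS mV2) \<eta>V2 \<eta>V2i"
      and pW: "inv_pair W (DS mW) \<eta>W \<eta>Wi" and pW2: "inv_pair W (DS mW2) \<eta>W2 \<eta>W2i" using H by blast+
    have mV: "is_mor V (DS mV) \<eta>V" "is_mor (DS mV) V \<eta>Vi" "comp (DS mV) \<eta>Vi \<eta>V = idm V"
      using pV by (auto simp: inv_pair_def)
    have mV2: "is_mor V (DS mV2) \<eta>V2" "is_mor (DS mV2) V \<eta>V2i" "comp (DS mV2) \<eta>V2i \<eta>V2 = idm V"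
      using pV2 by (auto simp: inv_pair_def)
    have mW: "is_mor W (DS mW) \<eta>W" "is_mor (DS mW) W \<eta>Wi" "comp (DS mW) \<eta>Wi \<eta>W = idm W"
      using pW by (auto simp: inv_pair_def)
    have mW2: "is_mor W (DS mW2) \<eta>W2" "is_mor (DS mW2) W \<eta>W2i"
      using pW2 by (auto simp: inv_pair_def)
    define X where "X = comp V \<phi> \<eta>Vi"
    define Y where "Y = comp V \<phi> \<eta>V2i"
    define FN where "FN = comp W \<eta>W2 \<eta>Wi"
    define FM where "FM = comp V \<eta>V2 \<eta>Vi"
    have Xm: "is_mor (DS mV) W X" unfolding X_def by (rule is_mor_comp[OF mV(2) phi fD fV fW])
    have Ym: "is_mor (DS mV2) W Y" unfolding Y_def by (rule is_mor_comp[OF mV2(2) phi fD fV fW])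
    have Phm: "is_mor (DS mV) (DS mW) (comp W \<eta>W X)" by (rule is_mor_comp[OF Xm mW(1) fD fW fD])
    have Psm: "is_mor (DS mV2) (DS mW2) (comp W \<eta>W2 Y)" by (rule is_mor_comp[OF Ym mW2(1) fD fW fD])
    have FNp: "inv_pair (DS mW) (DS mW2) FN (comp W \<eta>W \<eta>W2i)" unfolding FN_def
      by (rule inv_pair_trans[OF pW pW2 fW fD fD])
    have FMp: "inv_pair (DS mV) (DS mV2) FM (comp V \<eta>V \<eta>V2i)" unfolding FM_def
      by (rule inv_pair_trans[OF pV pV2 fV fD fD])
    have FNm: "is_mor (DS mW) (DS mW2) FN" and FMm: "is_mor (DS mV) (DS mV2) FM"
      using FNp FMp by (auto simp: inv_pair_def)
    have L: "comp (DS mW) FN (comp W \<eta>W X) = comp W \<eta>W2 X"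
    proof -
      have "comp (DS mW) FN (comp W \<eta>W X) = comp W \<eta>W2 (comp (DS mW) \<eta>Wi (comp W \<eta>W X))"
        unfolding FN_def by (rule comp_assoc[OF fW fD, symmetric])
      also have "comp (DS mW) \<eta>Wi (comp W \<eta>W X) = comp W (comp (DS mW) \<eta>Wi \<eta>W) X"
        by (rule comp_assoc[OF fD fW])
      also have "\<dots> = X" unfolding mW(3) by (rule comp_idm_left[OF Xm fW])
      finally show ?thesis .
    qed
    have R: "comp (DS mV2) (comp W \<eta>W2 Y) FM = comp W \<eta>W2 X"
    proof -
      have "comp (DS mV2) (comp W \<eta>W2 Y) FM = comp W \<eta>W2 (comp (DS mV2) Y FM)"
        by (rule comp_assoc[OF fW fD, symmetric])
      also have "comp (DS mV2) Y FM = comp V \<phi> (comp (DS mV2) \<eta>V2i FM)"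
        unfolding Y_def by (rule comp_assoc[OF fV fD, symmetric])
      also have "comp (DS mV2) \<eta>V2i FM = comp V (comp (DS mV2) \<eta>V2i \<eta>V2) \<eta>Vi"
        unfolding FM_def by (rule comp_assoc[OF fD fV])
      also have "\<dots> = \<eta>Vi" unfolding mV2(3) by (rule comp_idm_left[OF mV(2) fV])
      finally show ?thesis unfolding X_def .
    qed
    show "arrow_iso (Iint (mV 1 3) 1 3) (Iint (mW 1 3) 1 3)
                   (blk mV mW 1 3 1 3 (comp W \<eta>W (comp V \<phi> \<eta>Vi)))
                 (Iint (mV2 1 3) 1 3) (Iint (mW2 1 3) 1 3)
                   (blk mV2 mW2 1 3 1 3 (comp W \<eta>W2 (comp V \<phi> \<eta>V2i)))"
      unfolding arrow_iso_def X_def[symmetric] Y_def[symmetric]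
    proof (intro conjI exI)
      show "is_mor (Iint (mV 1 3) 1 3) (Iint (mW 1 3) 1 3) (blk mV mW 1 3 1 3 (comp W \<eta>W X))"
        by (rule blk_mor[OF Phm])
      show "is_mor (Iint (mV2 1 3) 1 3) (Iint (mW2 1 3) 1 3) (blk mV2 mW2 1 3 1 3 (comp W \<eta>W2 Y))"
        by (rule blk_mor[OF Psm])
      show "is_iso (Iint (mV 1 3) 1 3) (Iint (mV2 1 3) 1 3) (blk mV mV2 1 3 1 3 FM)"
        using blk_inv_pair[OF FMp] by (auto simp: is_iso_def)
      show "is_iso (Iint (mW 1 3) 1 3) (Iint (mW2 1 3) 1 3) (blk mW mW2 1 3 1 3 FN)"
        using blk_inv_pair[OF FNp] by (auto simp: is_iso_def)
      show "comp (Iint (mW 1 3) 1 3) (blk mW mW2 1 3 1 3 FN) (blk mV mW 1 3 1 3 (comp W \<eta>W X)) =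
            comp (Iint (mV2 1 3) 1 3) (blk mV2 mW2 1 3 1 3 (comp W \<eta>W2 Y)) (blk mV mV2 1 3 1 3 FM)"
        using blk_comp[OF Phm FNm] blk_comp[OF FMm Psm] L R by simp
    qed
  qed
  show ?thesis using P1 P2 P3 P4 P5 by blast
qed

end
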